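(* Let $a\ge b\ge2$ be integers with $a/b\in\mathbb Z$, $\beta>1$ the positive root of $\beta^2=a\beta+b$, $\beta'=a-\beta$, and $\mathcal A=\{0,\dots,b-1\}$. For $n\ge1$ let $\mu_n=\min_{j\in\{0,1,\dots,b^n-1\}}P_{\mathrm{Pref}_{2n}(\mathbf h(j))}(\beta')$, and define sets $J_n\subseteq\mathbb Z$ by $J_0=\{0\}$ and \[ J_n=\Big\{j\in J_{n-1}+b^{n-1}\mathcal A:\ P_{\mathrm{Pref}_{2n}(\mathbf h(j))}(\beta')<\mu_n+|\beta'|^{2n+1}\tfrac{b-1}{1-(\beta')^2}\Big\}\quad(n\ge1). \] Then the sequence $(\mu_n)_{n\ge1}$ is non-increasing, and for every $n\ge1$, \[ \mu_n=\min_{j\in J_{n-1}+b^{n-1}\mathcal A}P_{\mathrm{Pref}_{2n}(\mathbf h(j))}(\beta'). \]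
   Context: For an algebraic integer $\beta$, the $\beta$-adic expansion of $x\in\mathbb Z[\beta]$ is the unique infinite word $\mathbf h(x)=u_0u_1u_2\cdots$ with $u_n\in\{0,1,\dots,|N(\beta)|-1\}$ such that $x-\sum_{i=0}^{n-1}u_i\beta^i\in\beta^n\mathbb Z[\beta]$ for all $n\in\mathbb N$; here $|N(\beta)|=b$. $\mathrm{Pref}_n(\mathbf u)$ is the prefix of length $n$ of $\mathbf u$; for a finite word $w=w_0\cdots w_{k-1}$, $P_w(X)=\sum_{i=0}^{k-1}w_iX^i$. $J+b^{n-1}\mathcal A=\{j+b^{n-1}d: j\in J, d\in\mathcal A\}$. *)

theory Defs
  imports Complex_Main
begin

definition Zbeta :: "real \<Rightarrow> real set" where
  "Zbeta beta = {real_of_int p + real_of_int q * beta | p q. True}"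

definition is_beta_expansion :: "nat \<Rightarrow> real \<Rightarrow> real \<Rightarrow> (nat \<Rightarrow> nat) \<Rightarrow> bool" where
  "is_beta_expansion b beta x u \<longleftrightarrow>
     (\<forall>n. u n < b) \<and>
     (\<forall>n. \<exists>y \<in> Zbeta beta. x - (\<Sum>i<n. real (u i) * beta ^ i) = beta ^ n * y)"

definition hexp :: "nat \<Rightarrow> real \<Rightarrow> real \<Rightarrow> (nat \<Rightarrow> nat)" where
  "hexp b beta x = (THE u. is_beta_expansion b beta x u)"

definition Ppref :: "(nat \<Rightarrow> nat) \<Rightarrow> nat \<Rightarrow> real \<Rightarrow> real" where
  "Ppref u k t = (\<Sum>i<k. real (u i) * t ^ i)"

definition Pj :: "nat \<Rightarrow> nat \<Rightarrow> real \<Rightarrow> nat \<Rightarrow> int \<Rightarrow> real" where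
  "Pj a b beta n j = Ppref (hexp b beta (real_of_int j)) (2 * n) (real a - beta)"

definition mu :: "nat \<Rightarrow> nat \<Rightarrow> real \<Rightarrow> nat \<Rightarrow> real" where
  "mu a b beta n = Min (Pj a b beta n ` {0 ..< int b ^ n})"

definition extJ :: "nat \<Rightarrow> int set \<Rightarrow> nat \<Rightarrow> int set" where
  "extJ b J m = {j + int b ^ m * int d | j d. j \<in> J \<and> d < b}"

fun Jset :: "nat \<Rightarrow> nat \<Rightarrow> real \<Rightarrow> nat \<Rightarrow> int set" where
  "Jset a b beta 0 = {0}"
| "Jset a b beta (Suc m) =
     {j \<in> extJ b (Jset a b beta m) m.
        Pj a b beta (Suc m) j < mu a b beta (Suc m)
          + \<bar>real a - beta\<bar> ^ (2 * Suc m + 1) * (real b - 1) / (1 - (real a - beta)^2)}"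

end

theory Submission
  imports Defs
begin


locale bsys =
  fixes a b :: nat and beta :: real
  assumes b2: "b \<ge> 2" and ab: "a \<ge> b" and bdvd: "b dvd a"
    and beta1: "beta > 1" and beq: "beta ^ 2 = real a * beta + real b"
begin

abbreviation "ZB \<equiv> Zbeta beta"

lemma Zb_iff: "x \<in> ZB \<longleftrightarrow> (\<exists>p q. x = of_int p + of_int q * beta)"
  unfolding Zbeta_def by auto

lemma Zb_int: "of_int k \<in> ZB"
  unfolding Zb_iff by (rule exI[of _ k], rule exI[of _ 0]) simp

lemma Zb_nat: "real n \<in> ZB" using Zb_int[of "int n"] by simp

lemma Zb_beta: "beta \<in> ZB"
  unfolding Zb_iff by (rule exI[of _ 0], rule exI[of _ 1]) simp

lemma Zb_add: assumes "x \<in> ZB" "y \<in> ZB" shows "x + y \<in> ZB"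
proof -
  obtain p q r s where "x = of_int p + of_int q * beta" "y = of_int r + of_int s * beta"
    using assms unfolding Zb_iff by blast
  then show ?thesis unfolding Zb_iff
    by (intro exI[of _ "p+r"] exI[of _ "q+s"]) (simp add: algebra_simps)
qed

lemma Zb_diff: assumes "x \<in> ZB" "y \<in> ZB" shows "x - y \<in> ZB"
proof -
  obtain p q r s where "x = of_int p + of_int q * beta" "y = of_int r + of_int s * beta"
    using assms unfolding Zb_iff by blast
  then show ?thesis unfolding Zb_iff
    by (intro exI[of _ "p-r"] exI[of _ "q-s"]) (simp add: algebra_simps)
qed

lemma bb: "beta * beta = real a * beta + real b" using beq by (simp add: power2_eq_square)

lemma Zb_mult: assumes "x \<in> ZB" "y \<in> ZB" shows "x * y \<in> ZB"
proof -
  obtain p q r s where xy: "x = of_int p + of_int q * beta" "y = of_int r + of_int s * beta"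
    using assms unfolding Zb_iff by blast
  have "x * y = of_int (p*r) + of_int (p*s+q*r) * beta + of_int (q*s) * (beta*beta)"
    unfolding xy by (simp add: algebra_simps)
  also have "\<dots> = of_int (p*r + q*s*int b) + of_int (p*s+q*r+q*s*int a) * beta"
    unfolding bb by (simp add: algebra_simps)
  finally show ?thesis unfolding Zb_iff by blast
qed

lemma Zb_pow: "x \<in> ZB \<Longrightarrow> x ^ n \<in> ZB"
  by (induction n) (auto intro: Zb_mult simp: Zb_int[of 1, simplified])

lemma Zb_sum: "(\<Sum>i<n. real (u i) * beta ^ i) \<in> ZB"
  by (induction n) (auto intro!: Zb_add Zb_mult Zb_pow Zb_nat Zb_beta simp: Zb_int[of 0, simplified])

lemma beta_irr: "beta \<notin> \<rat>"
proof
  assume "beta \<in> \<rat>"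
  then obtain p q :: int where q: "q > 0" "coprime p q" and bq: "beta = of_int p / of_int q"
    by (rule Rats_cases')
  have "beta * of_int q = of_int p" using bq q by simp
  then have "(beta * of_int q)^2 = real a * (beta * of_int q) * of_int q + real b * of_int q ^ 2"
  proof -
    have "(beta * of_int q)^2 = beta^2 * of_int q ^2" by (simp add: power_mult_distrib)
    also have "\<dots> = real a * (beta * of_int q) * of_int q + real b * of_int q ^ 2"
      unfolding beq by (simp add: algebra_simps power2_eq_square)
    finally show ?thesis .
  qed
  then have "real_of_int (p^2) = real_of_int (int a * p * q + int b * q^2)"
    using \<open>beta * of_int q = of_int p\<close> by simp
  then have pe: "p^2 = int a * p * q + int b * q^2" by linarith
  then have "q dvd p^2" by (simp add: power2_eq_square)
  moreover have "coprime q (p^2)" using q(2) by (simp add: coprime_commute)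
  ultimately have "is_unit q" by (metis coprime_common_divisor dvd_refl)
  then have "q = 1" using q by simp
  then have bp: "beta = of_int p" using bq by simp
  have pe2: "p * (p - int a) = int b" using pe \<open>q = 1\<close> by (simp add: power2_eq_square algebra_simps)
  have "p > 1" using bp beta1 by simp
  have "p - int a \<ge> 1"
  proof (rule ccontr)
    assume "\<not> p - int a \<ge> 1"
    then have "p * (p - int a) \<le> 0" using \<open>p > 1\<close> by (simp add: mult_nonneg_nonpos)
    then show False using pe2 b2 by simp
  qed
  then have "p * (p - int a) \<ge> p" using \<open>p>1\<close> by simp
  then have "p \<le> int b" using pe2 by simp
  moreover have "p \<ge> int a + 1" using \<open>p - int a \<ge> 1\<close> by simp
  ultimately show False using ab by simp
qed

lemma Zb_uniq:
  assumes "of_int p + of_int q * beta = of_int r + of_int s * beta"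
  shows "p = r \<and> q = s"
proof (cases "q = s")
  case True then show ?thesis using assms by simp
next
  case False
  then have "beta = of_int (p - r) / of_int (s - q)" using assms
    by (simp add: field_simps)
  then have "beta \<in> \<rat>" by simp
  then show ?thesis using beta_irr by simp
qed

lemma dvd_of_bmult:
  assumes "of_int k = beta * y" "y \<in> ZB" shows "int b dvd k"
proof -
  obtain r s where y: "y = of_int r + of_int s * beta" using assms(2) unfolding Zb_iff by blast
  have "beta * y = of_int r * beta + of_int s * (beta*beta)" unfolding y by (simp add: algebra_simps)
  also have "\<dots> = of_int (s * int b) + of_int (r + s * int a) * beta" unfolding bb by (simp add: algebra_simps)
  finally have "of_int k + of_int 0 * beta = of_int (s * int b) + of_int (r + s * int a) * beta"
    using assms(1) by simp
  then have "k = s * int b" using Zb_uniq by blast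
  then show ?thesis by simp
qed

lemma digit_eq:
  assumes "u < b" "v < b" "real u - real v = beta * y" "y \<in> ZB" shows "u = v"
proof -
  have "of_int (int u - int v) = beta * y" using assms(3) by simp
  then have "int b dvd (int u - int v)" using dvd_of_bmult assms(4) by blast
  moreover have "\<bar>int u - int v\<bar> < int b" using assms(1,2) by linarith
  ultimately have "int u - int v = 0"
    by (metis dvd_imp_le_int abs_of_nat leD)
  then show ?thesis by simp
qed

end



context bsys begin

definition "dvb x \<longleftrightarrow> (\<exists>y\<in>ZB. x = beta * y)"

definition S :: "(nat \<Rightarrow> nat) \<Rightarrow> nat \<Rightarrow> real" where
  "S u k = (\<Sum>i<k. real (u i) * beta ^ i)"

lemma S_Suc: "S u (Suc k) = S u k + real (u k) * beta ^ k"
  unfolding S_def by simp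

lemma prefix_unique:
  assumes u: "\<forall>i. u i < b" and v: "\<forall>i. v i < b"
    and hu: "\<forall>k\<le>K. \<exists>y\<in>ZB. x - S u k = beta ^ k * y"
    and hv: "\<forall>k\<le>K. \<exists>y\<in>ZB. x - S v k = beta ^ k * y"
  shows "\<forall>i<K. u i = v i"
proof (intro allI impI)
  fix i assume "i < K"
  then show "u i = v i"
  proof (induction i rule: less_induct)
    case (less i)
    then have eqs: "S u i = S v i" unfolding S_def by (intro sum.cong) auto
    have iK: "i \<le> K" "Suc i \<le> K" using less.prems by auto
    obtain y1 where y1: "y1 \<in> ZB" "x - S u i = beta ^ i * y1" using hu iK by blast
    obtain y2 where y2: "y2 \<in> ZB" "x - S v i = beta ^ i * y2" using hv iK by blast
    have bi: "beta ^ i \<noteq> 0" using beta1 by simp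
    have "beta ^ i * y1 = beta ^ i * y2" using y1(2) y2(2) eqs by metis
    then have "y1 = y2" using bi by auto
    obtain z1 where z1: "z1 \<in> ZB" "x - S u (Suc i) = beta ^ Suc i * z1" using hu iK by blast
    obtain z2 where z2: "z2 \<in> ZB" "x - S v (Suc i) = beta ^ Suc i * z2" using hv iK by blast
    have "beta ^ i * (y1 - real (u i)) = beta ^ i * (beta * z1)"
      using z1(2) y1(2) unfolding S_Suc by (simp add: algebra_simps)
    have b0: "beta \<noteq> 0" using beta1 by simp
    then have e1: "y1 - real (u i) = beta * z1" using \<open>beta ^ i * (y1 - real (u i)) = beta ^ i * (beta * z1)\<close> by simp
    have "beta ^ i * (y2 - real (v i)) = beta ^ i * (beta * z2)"
      using z2(2) y2(2) unfolding S_Suc by (simp add: algebra_simps)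
    then have e2: "y1 - real (v i) = beta * z2" using b0 \<open>y1 = y2\<close> by simp
    have "real (v i) - real (u i) = beta * (z1 - z2)" using e1 e2 by (simp add: algebra_simps)
    then show ?case using digit_eq[of "v i" "u i" "z1 - z2"] u v Zb_diff z1 z2 by auto
  qed
qed

definition nxt :: "int \<times> int \<Rightarrow> int \<times> int" where
  "nxt pq = (snd pq - (fst pq div int b) * int a, fst pq div int b)"

definition vl :: "int \<times> int \<Rightarrow> real" where
  "vl pq = of_int (fst pq) + of_int (snd pq) * beta"

definition dg :: "int \<times> int \<Rightarrow> nat" where
  "dg pq = nat (fst pq mod int b)"

lemma vl_step: "vl pq = real (dg pq) + beta * vl (nxt pq)"
proof -
  obtain p q where pq: "pq = (p,q)" by force
  have bpos: "int b > 0" using b2 by simp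
  have m0: "p = p mod int b + int b * (p div int b)" by simp
  have m: "real_of_int p = real_of_int (p mod int b) + real b * real_of_int (p div int b)"
    using arg_cong[OF m0, of real_of_int] by (simp only: of_int_add of_int_mult of_int_of_nat_eq)
  have "real (dg pq) = of_int (p mod int b)" unfolding dg_def pq using bpos by simp
  moreover have "beta * vl (nxt pq) = of_int (q - (p div int b) * int a) * beta + of_int (p div int b) * (beta*beta)"
    unfolding vl_def nxt_def pq by (simp add: algebra_simps)
  moreover have "of_int (q - (p div int b) * int a) * beta + of_int (p div int b) * (beta*beta) = of_int q * beta + of_int (int b * (p div int b))"
    unfolding bb by (simp add: algebra_simps)
  ultimately have "real (dg pq) + beta * vl (nxt pq) = of_int (p mod int b) + real b * of_int (p div int b) + of_int q * beta"
    by simp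
  also have "\<dots> = vl pq" unfolding vl_def pq using m by simp
  finally show ?thesis by simp
qed

lemma dg_lt: "dg pq < b"
  unfolding dg_def using b2 by (simp add: nat_less_iff)

lemma vl_Zb: "vl pq \<in> ZB" unfolding vl_def Zb_iff by blast

lemma exists_exp:
  assumes "x \<in> ZB" shows "\<exists>u. is_beta_expansion b beta x u"
proof -
  obtain p q where x: "x = of_int p + of_int q * beta" using assms unfolding Zb_iff by blast
  define st where "st n = (nxt ^^ n) (p,q)" for n
  define u where "u n = dg (st n)" for n
  have st_Suc: "st (Suc n) = nxt (st n)" for n unfolding st_def by simp
  have key: "x - (\<Sum>i<n. real (u i) * beta ^ i) = beta ^ n * vl (st n)" for n
  proof (induction n)
    case 0 then show ?case unfolding st_def vl_def x by simp
  next
    case (Suc n)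
    have "x - (\<Sum>i<Suc n. real (u i) * beta ^ i) = beta ^ n * vl (st n) - real (u n) * beta ^ n"
      using Suc by simp
    also have "\<dots> = beta ^ n * (beta * vl (st (Suc n)))"
      unfolding st_Suc u_def using vl_step[of "st n"] by (simp add: algebra_simps)
    finally show ?case by simp
  qed
  have "is_beta_expansion b beta x u"
    unfolding is_beta_expansion_def
  proof
    show "\<forall>n. u n < b" using dg_lt u_def by simp
    show "\<forall>n. \<exists>y\<in>ZB. x - (\<Sum>i<n. real (u i) * beta ^ i) = beta ^ n * y"
      using key vl_Zb by blast
  qed
  then show ?thesis by blast
qed

lemma exp_unique:
  assumes "is_beta_expansion b beta x u" "is_beta_expansion b beta x v" shows "u = v"
proof
  fix i
  have "\<forall>j<Suc i. u j = v j"
    by (rule prefix_unique[where x=x and K="Suc i"]) (use assms in \<open>auto simp: is_beta_expansion_def S_def\<close>)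
  then show "u i = v i" by simp
qed

lemma hexp_exp: assumes "x \<in> ZB" shows "is_beta_expansion b beta x (hexp b beta x)"
proof -
  have "\<exists>!u. is_beta_expansion b beta x u" using exists_exp[OF assms] exp_unique by blast
  then show ?thesis unfolding hexp_def by (rule theI')
qed

lemma hexp_lt: "x \<in> ZB \<Longrightarrow> hexp b beta x i < b"
  using hexp_exp unfolding is_beta_expansion_def by blast

lemma hexp_rem: "x \<in> ZB \<Longrightarrow> \<exists>y\<in>ZB. x - S (hexp b beta x) k = beta ^ k * y"
  using hexp_exp unfolding is_beta_expansion_def S_def by blast

end



context bsys begin

definition "cc = int a div int b"
definition "ee = of_int (1 + cc * int a) - of_int cc * beta"

lemma a_eq: "real a = of_int cc * real b"
proof -
  have "int a = cc * int b" unfolding cc_def using bdvd by (simp add: of_nat_dvd_iff)  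
  then show ?thesis by (metis of_int_mult of_int_of_nat_eq)
qed

lemma ee_Zb: "ee \<in> ZB" unfolding ee_def by (intro Zb_diff Zb_mult Zb_int Zb_beta)

lemma b_eq: "real b = beta^2 * ee"
  unfolding ee_def using beq a_eq by simp algebra

lemma bn_eq: "real b ^ n = beta ^ (2*n) * ee ^ n"
  unfolding b_eq by (simp add: power_mult_distrib power_mult)

lemma ee1: "\<exists>w\<in>ZB. ee - 1 = beta * w"
proof -
  have "ee - 1 = beta * (of_int (- cc*cc*int a - cc) + of_int (cc*cc) * beta)"
    unfolding ee_def using beq a_eq by simp algebra
  moreover have "of_int (- cc*cc*int a - cc) + of_int (cc*cc) * beta \<in> ZB"
    by (intro Zb_add Zb_mult Zb_int Zb_beta)
  ultimately show ?thesis by blast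
qed

lemma een1: "\<exists>w\<in>ZB. ee ^ n - 1 = beta * w"
proof (induction n)
  case 0 then show ?case using Zb_int[of 0] by (intro bexI[of _ 0]) auto
next
  case (Suc n)
  then obtain w1 where w1: "w1 \<in> ZB" "ee ^ n - 1 = beta * w1" by blast
  obtain w where w: "w \<in> ZB" "ee - 1 = beta * w" using ee1 by blast
  have "ee ^ Suc n - 1 = ee * (ee ^ n - 1) + (ee - 1)" by (simp add: algebra_simps)
  also have "\<dots> = beta * (ee * w1 + w)" unfolding w1(2) w(2) by (simp add: algebra_simps)
  finally show ?case using w w1 ee_Zb by (intro bexI[of _ "ee * w1 + w"]) (auto intro: Zb_add Zb_mult)
qed

lemma hexp_cong:
  assumes "i < 2*n"
  shows "hexp b beta (of_int (j + int b ^ n * z)) i = hexp b beta (of_int j) i"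
proof -
  let ?x = "real_of_int (j + int b ^ n * z)"
  have "\<forall>i<2*n. hexp b beta ?x i = hexp b beta (of_int j) i"
  proof (rule prefix_unique[where x = ?x])
    show "\<forall>i. hexp b beta ?x i < b" using hexp_lt Zb_int by blast
    show "\<forall>i. hexp b beta (of_int j) i < b" using hexp_lt Zb_int by blast
    show "\<forall>k\<le>2*n. \<exists>y\<in>ZB. ?x - S (hexp b beta ?x) k = beta ^ k * y"
      using hexp_rem Zb_int by blast
    show "\<forall>k\<le>2*n. \<exists>y\<in>ZB. ?x - S (hexp b beta (of_int j)) k = beta ^ k * y"
    proof (intro allI impI)
      fix k assume k: "k \<le> 2*n"
      obtain y where y: "y \<in> ZB" "of_int j - S (hexp b beta (of_int j)) k = beta ^ k * y"
        using hexp_rem Zb_int by blast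
      have "?x - S (hexp b beta (of_int j)) k = beta ^ k * y + real b ^ n * of_int z"
        using y(2) by (simp add: algebra_simps)
      also have "\<dots> = beta ^ k * y + beta ^ (k + (2*n - k)) * ee ^ n * of_int z"
        unfolding bn_eq using k by simp
      also have "\<dots> = beta ^ k * (y + beta ^ (2*n - k) * ee ^ n * of_int z)"
        by (simp add: power_add algebra_simps)
      finally show "\<exists>y\<in>ZB. ?x - S (hexp b beta (of_int j)) k = beta ^ k * y"
        using y(1) ee_Zb by (intro bexI[of _ "y + beta ^ (2*n - k) * ee ^ n * of_int z"])
          (auto intro!: Zb_add Zb_mult Zb_pow Zb_beta Zb_int)
    qed
  qed
  then show ?thesis using assms by blast
qed

lemma Pj_cong: "Pj a b beta n (j + int b ^ n * z) = Pj a b beta n j"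
  unfolding Pj_def Ppref_def using hexp_cong by (intro sum.cong) auto

lemma Pj_mod: "Pj a b beta n j = Pj a b beta n (j mod int b ^ n)"
proof -
  have "j = j mod int b ^ n + int b ^ n * (j div int b ^ n)" by simp
  then show ?thesis using Pj_cong[of n "j mod int b ^ n" "j div int b ^ n"] by simp
qed

lemma digit_zero: "\<exists>d<b. hexp b beta (of_int (j + int b ^ n * int d)) (2*n) = 0"
proof -
  let ?u = "hexp b beta (of_int j)"
  define d where "d = (if ?u (2*n) = 0 then 0 else b - ?u (2*n))"
  have ult: "?u (2*n) < b" using hexp_lt Zb_int by blast
  have dlt: "d < b" unfolding d_def using b2 by auto
  have ddvd: "int b dvd (int (?u (2*n)) + int d)" unfolding d_def using ult by auto
  let ?x = "real_of_int (j + int b ^ n * int d)"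
  let ?v = "hexp b beta ?x"
  have Seq: "S ?v (2*n) = S ?u (2*n)" unfolding S_def using hexp_cong[of _ n j "int d"]
    by (intro sum.cong) auto
  obtain y where y: "y \<in> ZB" "of_int j - S ?u (2*n) = beta ^ (2*n) * y"
    using hexp_rem Zb_int by blast
  obtain z where z: "z \<in> ZB" "of_int j - S ?u (Suc (2*n)) = beta ^ Suc (2*n) * z"
    using hexp_rem Zb_int by blast
  obtain y' where y': "y' \<in> ZB" "?x - S ?v (2*n) = beta ^ (2*n) * y'"
    using hexp_rem Zb_int by blast
  obtain z' where z': "z' \<in> ZB" "?x - S ?v (Suc (2*n)) = beta ^ Suc (2*n) * z'"
    using hexp_rem Zb_int by blast
  obtain w where w: "w \<in> ZB" "ee ^ n - 1 = beta * w" using een1 by blast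
  have bn0: "beta ^ (2*n) \<noteq> 0" using beta1 by simp
  have b0: "beta \<noteq> 0" using beta1 by simp
  have "beta ^ (2*n) * (y - real (?u (2*n))) = beta ^ (2*n) * (beta * z)"
    using y(2) z(2) unfolding S_Suc by (simp add: algebra_simps)
  then have e1: "y - real (?u (2*n)) = beta * z" using b0 by simp
  have "beta ^ (2*n) * (y' - real (?v (2*n))) = beta ^ (2*n) * (beta * z')"
    using y'(2) z'(2) unfolding S_Suc by (simp add: algebra_simps)
  then have e2: "y' - real (?v (2*n)) = beta * z'" using b0 by simp
  have "beta ^ (2*n) * y' = beta ^ (2*n) * y + real b ^ n * real d"
    using y(2) y'(2) Seq by (simp add: algebra_simps)
  also have "\<dots> = beta ^ (2*n) * (y + ee ^ n * real d)" unfolding bn_eq by (simp add: algebra_simps)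
  finally have "y' = y + ee ^ n * real d" using b0 by simp
  then have "real (?u (2*n)) + real d - real (?v (2*n)) = (y' - real (?v (2*n))) - (y - real (?u (2*n))) - (ee ^ n - 1) * real d"
    by (simp add: algebra_simps)
  also have "\<dots> = beta * z' - beta * z - beta * w * real d" unfolding e1 e2 w(2) by simp
  finally have "real (?u (2*n)) + real d - real (?v (2*n)) = beta * (z' - z - w * real d)"
    by (simp add: algebra_simps)
  then have "of_int (int (?u (2*n)) + int d - int (?v (2*n))) = beta * (z' - z - w * real d)"
    by simp
  moreover have "z' - z - w * real d \<in> ZB" using z z' w by (intro Zb_diff Zb_mult Zb_nat)
  ultimately have d1: "int b dvd (int (?u (2*n)) + int d - int (?v (2*n)))"
    using dvd_of_bmult by blast
  have "int (?v (2*n)) = (int (?u (2*n)) + int d) - (int (?u (2*n)) + int d - int (?v (2*n)))"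
    by simp
  then have "int b dvd int (?v (2*n))" using ddvd d1 by (metis dvd_diff)
  then have dv: "b dvd ?v (2*n)" by simp
  moreover have "?v (2*n) < b" using hexp_lt Zb_int by blast
  ultimately have "?v (2*n) = 0"
    using dvd_imp_le[OF dv] by (cases "?v (2*n) = 0") auto
  then show ?thesis using dlt by blast
qed

end



context bsys begin

abbreviation "tt \<equiv> real a - beta"

lemma t_bounds: "tt < 0" "tt > -1"
proof -
  have e: "beta * (beta - real a) = real b" using bb by (simp add: algebra_simps)
  have "beta - real a > 0"
  proof (rule ccontr)
    assume "\<not> beta - real a > 0"
    then have "beta * (beta - real a) \<le> 0" using beta1 by (simp add: mult_nonneg_nonpos)
    then show False using e b2 by simp
  qed
  then show "tt < 0" by simp
  show "tt > -1"
  proof (rule ccontr)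
    assume "\<not> tt > -1"
    then have h: "beta - real a \<ge> 1" by simp
    have "beta * (beta - real a) \<ge> beta * 1" using h beta1 by (intro mult_left_mono) auto
    then have "real b \<ge> beta" using e by simp
    moreover have "beta \<ge> real a + 1" using h by simp
    ultimately show False using ab by simp
  qed
qed

lemma s_lt1: "tt^2 < 1"
proof -
  have "\<bar>tt\<bar> < 1" using t_bounds by simp
  then have "\<bar>tt\<bar>^2 < 1^2" by (intro power_strict_mono) auto
  then show ?thesis by simp
qed

lemma Ppref_Suc: "Ppref u (Suc k) x = Ppref u k x + real (u k) * x ^ k"
  unfolding Ppref_def by simp

lemma pair_lb:
  assumes "\<forall>i. u i < b"
  shows "real (u (2*l)) * tt ^ (2*l) + real (u (Suc (2*l))) * tt ^ Suc (2*l) \<ge> - (real b - 1) * \<bar>tt\<bar> ^ Suc (2*l)"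
proof -
  have "tt ^ (2*l) = (tt^2)^l" by (simp add: power_mult)
  then have a1: "real (u (2*l)) * tt ^ (2*l) \<ge> 0" by simp
  have "tt ^ Suc (2*l) = - (abs tt ^ Suc (2*l))"
  proof -
    have "tt = - (abs tt)" using t_bounds by simp
    then have "tt ^ Suc (2*l) = (- (abs tt)) ^ Suc (2*l)" by simp
    also have "\<dots> = - (abs tt ^ Suc (2*l))" by (simp add: power_minus_odd)
    finally show ?thesis .
  qed
  moreover have h2: "real (u (Suc (2*l))) \<le> real b - 1"
  proof -
    have "u (Suc (2*l)) + 1 \<le> b" using assms by (simp add: Suc_le_eq)
    then have "real (u (Suc (2*l)) + 1) \<le> real b" by (simp only: of_nat_le_iff)
    then show ?thesis by simp
  qed
  moreover have "abs tt ^ Suc (2*l) \<ge> 0" by simp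
  ultimately have "real (u (Suc (2*l))) * tt ^ Suc (2*l) \<ge> - (real b - 1) * \<bar>tt\<bar> ^ Suc (2*l)"
  proof -
    have m1: "real (u (Suc (2*l))) * abs tt ^ Suc (2*l) \<le> (real b - 1) * abs tt ^ Suc (2*l)"
      using mult_right_mono[OF h2, of "abs tt ^ Suc (2*l)"] by simp
    have m2: "real (u (Suc (2*l))) * tt ^ Suc (2*l) = - (real (u (Suc (2*l))) * abs tt ^ Suc (2*l))"
      using \<open>tt ^ Suc (2*l) = - (abs tt ^ Suc (2*l))\<close> by (simp only: mult_minus_right)
    have m3: "- (real b - 1) * \<bar>tt\<bar> ^ Suc (2*l) = - ((real b - 1) * abs tt ^ Suc (2*l))"
      by (simp only: mult_minus_left)
    show ?thesis unfolding m2 m3 using m1 by linarith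
  qed
  then show ?thesis using a1 by linarith
qed

lemma lb:
  assumes "\<forall>i. u i < b"
  shows "(1 - tt^2) * (Ppref u (2*(m+k)) tt - Ppref u (2*m) tt)
          \<ge> - ((real b - 1) * \<bar>tt\<bar> ^ Suc (2*m)) * (1 - (tt^2)^k)"
proof (induction k)
  case 0 then show ?case by simp
next
  case (Suc k)
  let ?s = "tt^2" and ?B = "(real b - 1) * \<bar>tt\<bar> ^ Suc (2*m)"
  let ?l = "m + k"
  let ?T = "real (u (2*?l)) * tt ^ (2*?l) + real (u (Suc (2*?l)))* tt ^ Suc (2*?l)"
  have step: "Ppref u (2*(m+Suc k)) tt = Ppref u (2*?l) tt + ?T"
  proof -
    have "2*(m+Suc k) = Suc (Suc (2*?l))" by simp
    then show ?thesis by (simp only: Ppref_Suc)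
  qed
  have pw: "\<bar>tt\<bar> ^ Suc (2*?l) = \<bar>tt\<bar> ^ Suc (2*m) * ?s ^ k"
  proof -
    have "\<bar>tt\<bar> ^ Suc (2*?l) = \<bar>tt\<bar> ^ Suc (2*m) * \<bar>tt\<bar> ^ (2*k)"
      by (simp add: power_add[symmetric] algebra_simps)
    also have "\<bar>tt\<bar> ^ (2*k) = ?s ^ k" by (simp add: power_mult)
    finally show ?thesis .
  qed
  have T: "?T \<ge> - ?B * ?s^k" using pair_lb[OF assms, of ?l] unfolding pw by (simp add: algebra_simps)
  have s1: "1 - ?s \<ge> 0" using s_lt1 by simp
  have "(1 - ?s) * ?T \<ge> (1 - ?s) * (- ?B * ?s^k)" using mult_left_mono[OF T s1] .
  then have "(1 - ?s) * (Ppref u (2*(m+Suc k)) tt - Ppref u (2*m) tt)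
     \<ge> - ?B * (1 - ?s^k) + (1 - ?s) * (- ?B * ?s^k)"
    using Suc unfolding step by (simp add: algebra_simps)
  moreover have "- ?B * (1 - ?s^k) + (1 - ?s) * (- ?B * ?s^k) = - ?B * (1 - ?s ^ Suc k)"
    by (simp add: algebra_simps)
  ultimately show ?case by simp
qed

lemma lb_strict:
  assumes "\<forall>i. u i < b" "m \<le> n"
  shows "Ppref u (2*m) tt - Ppref u (2*n) tt < \<bar>tt\<bar> ^ (2*m + 1) * (real b - 1) / (1 - tt^2)"
proof -
  let ?s = "tt^2" and ?B = "(real b - 1) * \<bar>tt\<bar> ^ Suc (2*m)"
  have n: "n = m + (n - m)" using assms by simp
  have L: "(1 - ?s) * (Ppref u (2*n) tt - Ppref u (2*m) tt) \<ge> - ?B * (1 - ?s^(n-m))"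
    using lb[OF assms(1), of m "n - m"] n by simp
  have Bp: "?B > 0" using b2 t_bounds by simp
  have sp: "?s ^ (n-m) > 0" using t_bounds by simp
  have "?B * ?s^(n-m) > 0" using Bp sp by (rule mult_pos_pos)
  then have "- ?B * (1 - ?s^(n-m)) > - ?B" by (simp add: algebra_simps)
  with L have "(1 - ?s) * (Ppref u (2*m) tt - Ppref u (2*n) tt) < ?B" by (simp add: algebra_simps)
  moreover have "1 - ?s > 0" using s_lt1 by simp
  ultimately show ?thesis by (simp add: field_simps)
qed

lemma mu_le: "mu a b beta n \<le> Pj a b beta n j"
proof -
  have bp: "int b ^ n > 0" using b2 by simp
  have "j mod int b ^ n \<in> {0..<int b ^ n}" using bp by simp
  then have "mu a b beta n \<le> Pj a b beta n (j mod int b ^ n)"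
    unfolding mu_def by (intro Min_le) auto
  then show ?thesis using Pj_mod by simp
qed

lemma mu_att: "\<exists>j\<in>{0..<int b ^ n}. Pj a b beta n j = mu a b beta n"
proof -
  have bp: "int b ^ n > 0" using b2 by simp
  have "mu a b beta n \<in> Pj a b beta n ` {0..<int b ^ n}"
    unfolding mu_def by (rule Min_in) (use bp in auto)
  then show ?thesis by auto
qed

lemma mu_mono: "mu a b beta (Suc n) \<le> mu a b beta n"
proof -
  obtain j0 where j0: "Pj a b beta n j0 = mu a b beta n" using mu_att by blast
  obtain d where d: "d < b" "hexp b beta (of_int (j0 + int b ^ n * int d)) (2*n) = 0"
    using digit_zero by blast
  define j' where "j' = j0 + int b ^ n * int d"
  let ?v = "hexp b beta (of_int j')"
  have "Pj a b beta (Suc n) j' = Pj a b beta n j' + real (?v (2*n)) * tt ^ (2*n)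
          + real (?v (Suc (2*n))) * tt ^ Suc (2*n)"
  proof -
    have "2 * Suc n = Suc (Suc (2*n))" by simp
    then show ?thesis unfolding Pj_def by (simp only: Ppref_Suc)
  qed
  also have "\<dots> = mu a b beta n + real (?v (Suc (2*n))) * tt ^ Suc (2*n)"
    using d(2) j0 Pj_cong[of n j0 "int d"] unfolding j'_def by simp
  also have "\<dots> \<le> mu a b beta n"
  proof -
    have "tt ^ Suc (2*n) = tt * (tt^2)^n" by (simp add: power_mult)
    also have "\<dots> \<le> 0" using t_bounds by (simp add: mult_nonpos_nonneg)
    finally show ?thesis by (simp add: mult_nonneg_nonpos)
  qed
  finally show ?thesis using mu_le[of "Suc n" j'] by simp
qed

lemma mu_anti: "m \<le> n \<Longrightarrow> mu a b beta n \<le> mu a b beta m"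
proof (induction n rule: dec_induct)
  case base then show ?case by simp
next
  case (step n) then show ?case using mu_mono[of n] by simp
qed

lemma extJ_fin: "finite J \<Longrightarrow> finite (extJ b J m)"
proof -
  assume "finite J"
  moreover have "extJ b J m \<subseteq> (\<lambda>(j,d). j + int b ^ m * int d) ` (J \<times> {..<b})"
    unfolding extJ_def by auto
  ultimately show ?thesis by (meson finite_SigmaI finite_imageI finite_lessThan finite_subset)
qed

lemma Jset_fin: "finite (Jset a b beta m)"
proof (induction m)
  case 0 then show ?case by simp
next
  case (Suc m) then show ?case using extJ_fin by simp
qed

lemma minimizer_in:
  assumes j: "j \<in> {0..<int b ^ n}" "Pj a b beta n j = mu a b beta n"
  shows "m < n \<Longrightarrow> j mod int b ^ m \<in> Jset a b beta m"
proof (induction m)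
  case 0 then show ?case by simp
next
  case (Suc m)
  then have IH: "j mod int b ^ m \<in> Jset a b beta m" by simp
  define d where "d = nat ((j div int b ^ m) mod int b)"
  have bpos: "int b > 0" using b2 by simp
  have dd: "int d = (j div int b ^ m) mod int b" unfolding d_def using bpos by simp
  have dlt: "d < b" unfolding d_def using bpos by (simp add: nat_less_iff)
  have jm: "j mod int b ^ Suc m = j mod int b ^ m + int b ^ m * int d"
    unfolding dd power_Suc2 using zmod_zmult2_eq[of "int b" j "int b ^ m"] bpos by simp
  have inext: "j mod int b ^ Suc m \<in> extJ b (Jset a b beta m) m"
    unfolding extJ_def jm using IH dlt by blast
  let ?u = "hexp b beta (of_int j)"
  have ulb: "\<forall>i. ?u i < b" using hexp_lt Zb_int by blast
  have "Pj a b beta (Suc m) j - Pj a b beta n j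
          < \<bar>tt\<bar> ^ (2 * Suc m + 1) * (real b - 1) / (1 - tt^2)"
    unfolding Pj_def using lb_strict[OF ulb, of "Suc m" n] Suc.prems by simp
  moreover have "mu a b beta n \<le> mu a b beta (Suc m)" using mu_anti Suc.prems by simp
  moreover have "Pj a b beta (Suc m) (j mod int b ^ Suc m) = Pj a b beta (Suc m) j"
    by (rule Pj_mod[symmetric])
  ultimately have "Pj a b beta (Suc m) (j mod int b ^ Suc m) < mu a b beta (Suc m)
          + \<bar>tt\<bar> ^ (2 * Suc m + 1) * (real b - 1) / (1 - tt^2)"
    using j(2) by simp
  then show ?case using inext by simp
qed

lemma part2:
  assumes "n \<ge> 1"
  shows "mu a b beta n = Min (Pj a b beta n ` extJ b (Jset a b beta (n - 1)) (n - 1))"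
proof -
  obtain j where j: "j \<in> {0..<int b ^ n}" "Pj a b beta n j = mu a b beta n" using mu_att by blast
  let ?m = "n - 1"
  have n: "n = Suc ?m" using assms by simp
  have r: "j mod int b ^ ?m \<in> Jset a b beta ?m" using minimizer_in[OF j] assms by simp
  have bpos: "int b ^ ?m > 0" using b2 by simp
  have q0: "j div int b ^ ?m \<ge> 0" using j(1) bpos by (simp add: pos_imp_zdiv_nonneg_iff)
  have "j < int b ^ ?m * int b" using j(1) n by (metis atLeastLessThan_iff power_Suc2)
  moreover have "j = int b ^ ?m * (j div int b ^ ?m) + j mod int b ^ ?m" by simp
  moreover have "j mod int b ^ ?m \<ge> 0" using bpos by simp
  ultimately have qlt: "j div int b ^ ?m < int b"
  proof -
    assume a1: "j < int b ^ ?m * int b" and a2: "j = int b ^ ?m * (j div int b ^ ?m) + j mod int b ^ ?m"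
      and a3: "j mod int b ^ ?m \<ge> 0"
    show ?thesis
    proof (rule ccontr)
      assume "\<not> j div int b ^ ?m < int b"
      then have "int b ^ ?m * int b \<le> int b ^ ?m * (j div int b ^ ?m)"
        using bpos by (intro mult_left_mono) auto
      then show False using a1 a2 a3 by linarith
    qed
  qed
  have "j = j mod int b ^ ?m + int b ^ ?m * int (nat (j div int b ^ ?m))" using q0 by simp
  moreover have "nat (j div int b ^ ?m) < b" using qlt q0 by linarith
  ultimately have jin: "j \<in> extJ b (Jset a b beta ?m) ?m" unfolding extJ_def using r by blast
  show ?thesis
  proof (rule Min_eqI[symmetric])
    show "finite (Pj a b beta n ` extJ b (Jset a b beta ?m) ?m)" using extJ_fin Jset_fin by simp
    show "\<And>y. y \<in> Pj a b beta n ` extJ b (Jset a b beta ?m) ?m \<Longrightarrow> mu a b beta n \<le> y"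
      using mu_le by auto
    show "mu a b beta n \<in> Pj a b beta n ` extJ b (Jset a b beta ?m) ?m" using jin j(2) by force
  qed
qed

end

theorem mainTheorem11:
  fixes a b :: nat and beta :: real
  assumes "b \<ge> 2" and "a \<ge> b" and "b dvd a"
    and "beta > 1" and "beta ^ 2 = real a * beta + real b"
  shows "(\<forall>n\<ge>1. mu a b beta (Suc n) \<le> mu a b beta n) \<and>
         (\<forall>n\<ge>1. mu a b beta n = Min (Pj a b beta n ` extJ b (Jset a b beta (n - 1)) (n - 1)))"
proof -
  interpret bsys a b beta using assms by unfold_locales
  show ?thesis using mu_mono part2 by blast
qed



end
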